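(* Let $\Pi$ be a ground HEX-program, let $\hat{\mathbf{A}}$ be a compatible set of $\Pi$, and let $\mathbf{A}$ be the restriction of $\hat{\mathbf{A}}$ to the non-replacement (ordinary) atoms. Suppose the atom dependency graph of $\Pi$ contains no e-cycle under $\rightarrow^{d}$, and the guessing program $\hat{\Pi}$ has no nonempty unfounded set with respect to $\hat{\mathbf{A}}$. Then $\mathbf{A}$ is unfounded-free for $\Pi$, i.e. $\mathbf{A}^{\mathbf{T}}\cap X=\emptyset$ for every unfounded set $X$ of $\Pi$ with respect to $\mathbf{A}$.
   Context: Ground HEX-programs. A ground ordinary atom is $p(c_1,\dots,c_\ell)$ with predicate $p$ and constants $c_i$. A ground external atom is $\&g[\vec p](\vec c)$ with input list $\vec p=p_1,\dots,p_k$ (predicate names or constants) and output list $\vec c$ of constants. A ground HEX-program is a finite set of rules $r$: $a_1\lor\dots\lor a_k\leftarrow b_1,\dots,b_m,\mathrm{not}\,b_{m+1},\dots,\mathrm{not}\,b_n$, where the $a_i$ are ordinary ground atoms and each $b_j$ is an ordinary ground atom or ground external atom; $H(r)=\{a_1,\dots,a_k\}$, $B^+(r)=\{b_1,\dots,b_m\}$, $B^-(r)=\{b_{m+1},\dots,b_n\}$, $B(r)$ is the set of body literals. $A(\Pi)$ is the set of ordinary atoms occurring in $\Pi$. Interpretations. An interpretation $\mathbf{A}$ is a complete consistent set of signed literals $\mathbf{T}a$/$\mathbf{F}a$ over ground atoms; $\mathbf{A}^{\mathbf{T}}=\{a\mid \mathbf{T}a\in\mathbf{A}\}$. $\mathbf{A}\models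 a$ for ordinary $a$ iff $\mathbf{T}a\in\mathbf{A}$; each external predicate $\&g$ has a Boolean oracle $f_{\&g}(\mathbf{A},\vec p,\vec c)$ whose value depends only on the extensions in $\mathbf{A}$ of the input predicates in $\vec p$ (and on $\vec p,\vec c$), and $\mathbf{A}\models\&g[\vec p](\vec c)$ iff $f_{\&g}(\mathbf{A},\vec p,\vec c)=1$; $\mathbf{A}\models\mathrm{not}\,b$ iff $\mathbf{A}\not\models b$. Unfounded sets. For a program $\Pi$, interpretation $\mathbf{A}$ and a set $X$ of ordinary ground atoms appearing in $\Pi$, let $\mathbf{A}\,\dot\cup\neg.\,X=(\mathbf{A}\setminus\{\mathbf{T}a\mid a\in X\})\cup\{\mathbf{F}a\mid a\in X\}$. $X$ is an unfounded set of $\Pi$ w.r.t. $\mathbf{A}$ iff for every rule $r\in\Pi$ with $H(r)\cap X\neq\emptyset$ at least one holds: (i) some literal of $B(r)$ is false w.r.t. $\mathbf{A}$; (ii) some literal of $B(r)$ is false w.r.t. $\mathbf{A}\,\dot\cup\neg.\,X$; (iii) some atom of $H(r)\setminus X$ is true w.r.t. $\mathbf{A}$. Guessing program and compatible sets. $\hat\Pi$ is obtained from $\Pi$ by replacing each external atom $\&g[\vec p](\vec c)$ by a new ordinary replacement atom $e_{\&g[\vec p]}(\vec c)$ and adding the rule $e_{\&g[\vec p]}(\vec c)\lor ne_{\&g[\vec p]}(\vec c)\leftarrow$. A compatible set of $\Pi$ is an interpretation $\hat{\mathbf{A}}$ that is an answer set (Gelfond–Lifschitz) of $\hat\Pi$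 and such that $f_{\&g}(\hat{\mathbf{A}},\vec p,\vec c)=1$ iff $\mathbf{T}e_{\&g[\vec p]}(\vec c)\in\hat{\mathbf{A}}$ for all external atoms $\&g[\vec p](\vec c)$ of $\Pi$. Dependencies. For ground atoms $x,y$: $x\rightarrow y$ iff some rule $r\in\Pi$ has $x\in H(r)$ and $y\in B^+(r)$; $x\rightarrow_e y$ iff some rule $r\in\Pi$ has $x\in H(r)$ and an external atom $\&g[q_1,\dots,q_n](\vec e)\in B^+(r)\cup B^-(r)$ with $q_i$ equal to the predicate of $y$ for some $i$ (edges of the second kind are called e-edges). Let $\rightarrow^d=\rightarrow\cup\leftarrow\cup\rightarrow_e$ where $\leftarrow$ is the inverse of $\rightarrow$. A cycle under a relation $\circ$ is a sequence $c_0,\dots,c_{n+1}$, $n\ge0$, with $(c_i,c_{i+1})\in\circ$ for all $0\le i\le n$ and $c_0=c_{n+1}$; an e-cycle is a cycle under $\rightarrow^d$ with $(c_i,c_{i+1})\in\rightarrow_e$ for some $i$. *)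

theory Defs
  imports Main
begin

text \<open>'p: predicate names, 'c: constants, 'g: external predicate names.
  Inputs of external atoms are predicate names or constants.\<close>
datatype ('p, 'c) inp = IP 'p | IC 'c

text \<open>EA g ps cs and NEA g ps cs are
  the fresh replacement atoms e_{&g[ps]}(cs) and ne_{&g[ps]}(cs) used in the guessing
  program; they have their own (new) predicates, distinct from every 'p.\<close>
datatype ('p, 'c, 'g) atom =
    OA 'p "'c list"
  | EA 'g "('p, 'c) inp list" "'c list"
  | NEA 'g "('p, 'c) inp list" "'c list"

fun is_ordinary :: "('p, 'c, 'g) atom \<Rightarrow> bool" where
  "is_ordinary (OA p cs) = True"
| "is_ordinary _ = False"

datatype ('p, 'c, 'g) batom =
    Ord "('p, 'c, 'g) atom"
  | Ext 'g "('p, 'c) inp list" "'c list"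

datatype ('p, 'c, 'g) rule =
  Rule (H: "('p, 'c, 'g) atom set") (Bpos: "('p, 'c, 'g) batom set") (Bneg: "('p, 'c, 'g) batom set")

type_synonym ('p, 'c, 'g) program = "('p, 'c, 'g) rule set"

definition hex_program :: "('p, 'c, 'g) program \<Rightarrow> bool" where
  "hex_program P \<longleftrightarrow> finite P \<and>
     (\<forall>r\<in>P. finite (H r) \<and> finite (Bpos r) \<and> finite (Bneg r)
        \<and> (\<forall>a\<in>H r. is_ordinary a)
        \<and> (\<forall>a. Ord a \<in> Bpos r \<union> Bneg r \<longrightarrow> is_ordinary a))"

definition atoms_of :: "('p, 'c, 'g) program \<Rightarrow> ('p, 'c, 'g) atom set" where
  "atoms_of P = (\<Union>r\<in>P. H r \<union> {a. Ord a \<in> Bpos r \<union> Bneg r})"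

definition ext_atoms :: "('p, 'c, 'g) program \<Rightarrow> ('p, 'c, 'g) batom set" where
  "ext_atoms P = (\<Union>r\<in>P. {b \<in> Bpos r \<union> Bneg r. \<exists>g ps cs. b = Ext g ps cs})"

text \<open>An interpretation (complete consistent set of signed literals) is represented by
  the set of its true atoms A^T.\<close>
type_synonym ('p, 'c, 'g) orcl =
  "'g \<Rightarrow> ('p, 'c, 'g) atom set \<Rightarrow> ('p, 'c) inp list \<Rightarrow> 'c list \<Rightarrow> bool"

definition orc_local :: "('p, 'c, 'g) orcl \<Rightarrow> bool" where
  "orc_local f \<longleftrightarrow> (\<forall>g A B ps cs.
     (\<forall>p args. IP p \<in> set ps \<longrightarrow> (OA p args \<in> A \<longleftrightarrow> OA p args \<in> B))
     \<longrightarrow> f g A ps cs = f g B ps cs)"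

fun sat :: "('p, 'c, 'g) orcl \<Rightarrow> ('p, 'c, 'g) atom set \<Rightarrow> ('p, 'c, 'g) batom \<Rightarrow> bool" where
  "sat f A (Ord a) = (a \<in> A)"
| "sat f A (Ext g ps cs) = f g A ps cs"

definition body_false :: "('p, 'c, 'g) orcl \<Rightarrow> ('p, 'c, 'g) atom set \<Rightarrow> ('p, 'c, 'g) rule \<Rightarrow> bool" where
  "body_false f A r \<longleftrightarrow> (\<exists>b\<in>Bpos r. \<not> sat f A b) \<or> (\<exists>b\<in>Bneg r. sat f A b)"

text \<open>Unfounded sets; A \<union>. \<not>.X has true atoms A - X.\<close>
definition unfounded :: "('p, 'c, 'g) program \<Rightarrow> ('p, 'c, 'g) orcl \<Rightarrow> ('p, 'c, 'g) atom set
    \<Rightarrow> ('p, 'c, 'g) atom set \<Rightarrow> bool" where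
  "unfounded P f A X \<longleftrightarrow> X \<subseteq> atoms_of P \<and>
     (\<forall>r\<in>P. H r \<inter> X \<noteq> {} \<longrightarrow>
        body_false f A r \<or> body_false f (A - X) r \<or> (H r - X) \<inter> A \<noteq> {})"

definition unfounded_free :: "('p, 'c, 'g) program \<Rightarrow> ('p, 'c, 'g) orcl \<Rightarrow> ('p, 'c, 'g) atom set \<Rightarrow> bool" where
  "unfounded_free P f A \<longleftrightarrow> (\<forall>X. unfounded P f A X \<longrightarrow> A \<inter> X = {})"

fun repl :: "('p, 'c, 'g) batom \<Rightarrow> ('p, 'c, 'g) batom" where
  "repl (Ord a) = Ord a"
| "repl (Ext g ps cs) = Ord (EA g ps cs)"

definition guess_prog :: "('p, 'c, 'g) program \<Rightarrow> ('p, 'c, 'g) program" where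
  "guess_prog P =
     (\<lambda>r. Rule (H r) (repl ` Bpos r) (repl ` Bneg r)) ` P
     \<union> {Rule {EA g ps cs, NEA g ps cs} {} {} | g ps cs. Ext g ps cs \<in> ext_atoms P}"

fun osat :: "('p, 'c, 'g) atom set \<Rightarrow> ('p, 'c, 'g) batom \<Rightarrow> bool" where
  "osat A (Ord a) = (a \<in> A)"
| "osat A (Ext g ps cs) = False"

definition is_model :: "('p, 'c, 'g) program \<Rightarrow> ('p, 'c, 'g) atom set \<Rightarrow> bool" where
  "is_model P A \<longleftrightarrow> (\<forall>r\<in>P. (\<forall>b\<in>Bpos r. osat A b) \<and> (\<forall>b\<in>Bneg r. \<not> osat A b)
                               \<longrightarrow> H r \<inter> A \<noteq> {})"

definition gl_reduct :: "('p, 'c, 'g) program \<Rightarrow> ('p, 'c, 'g) atom set \<Rightarrow> ('p, 'c, 'g) program" where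
  "gl_reduct P A = (\<lambda>r. Rule (H r) (Bpos r) {}) ` {r \<in> P. \<forall>b\<in>Bneg r. \<not> osat A b}"

definition answer_set :: "('p, 'c, 'g) program \<Rightarrow> ('p, 'c, 'g) atom set \<Rightarrow> bool" where
  "answer_set P A \<longleftrightarrow> is_model (gl_reduct P A) A \<and>
     (\<forall>B. B \<subset> A \<longrightarrow> \<not> is_model (gl_reduct P A) B)"

definition compatible_set :: "('p, 'c, 'g) program \<Rightarrow> ('p, 'c, 'g) orcl \<Rightarrow> ('p, 'c, 'g) atom set \<Rightarrow> bool" where
  "compatible_set P f A \<longleftrightarrow> answer_set (guess_prog P) A \<and>
     (\<forall>g ps cs. Ext g ps cs \<in> ext_atoms P \<longrightarrow> (f g A ps cs \<longleftrightarrow> EA g ps cs \<in> A))"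

definition dep :: "('p, 'c, 'g) program \<Rightarrow> (('p, 'c, 'g) atom \<times> ('p, 'c, 'g) atom) set" where
  "dep P = {(x, y). \<exists>r\<in>P. x \<in> H r \<and> Ord y \<in> Bpos r}"

definition edep :: "('p, 'c, 'g) program \<Rightarrow> (('p, 'c, 'g) atom \<times> ('p, 'c, 'g) atom) set" where
  "edep P = {(x, y). \<exists>r\<in>P. x \<in> H r \<and>
     (\<exists>g ps cs. Ext g ps cs \<in> Bpos r \<union> Bneg r \<and>
        (\<exists>q args. IP q \<in> set ps \<and> y = OA q args))}"

definition ddep :: "('p, 'c, 'g) program \<Rightarrow> (('p, 'c, 'g) atom \<times> ('p, 'c, 'g) atom) set" where
  "ddep P = dep P \<union> (dep P)\<inverse> \<union> edep P"

definition has_e_cycle :: "('p, 'c, 'g) program \<Rightarrow> bool" where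
  "has_e_cycle P \<longleftrightarrow> (\<exists>cs. length cs \<ge> 2 \<and> hd cs = last cs \<and>
     (\<forall>i. Suc i < length cs \<longrightarrow> (cs ! i, cs ! Suc i) \<in> ddep P) \<and>
     (\<exists>i. Suc i < length cs \<and> (cs ! i, cs ! Suc i) \<in> edep P))"

end

theory Submission
  imports Defs
begin

lemma path_of_rtrancl:
  assumes "(x, y) \<in> R\<^sup>*"
  shows "\<exists>cs. cs \<noteq> [] \<and> hd cs = x \<and> last cs = y \<and> successively (\<lambda>a b. (a, b) \<in> R) cs"
  using assms
proof (induction rule: rtrancl_induct)
  case base
  then show ?case by (intro exI[of _ "[x]"]) simp
next
  case (step y z)
  then obtain cs where cs: "cs \<noteq> []" "hd cs = x" "last cs = y" "successively (\<lambda>a b. (a, b) \<in> R) cs"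
    by blast
  show ?case
    by (intro exI[of _ "cs @ [z]"]) (use cs step in \<open>auto simp: successively_append_iff\<close>)
qed

lemma ecycle_of_path:
  assumes "(x, x) \<in> (ddep P)\<^sup>* O edep P O (ddep P)\<^sup>*"
  shows "has_e_cycle P"
proof -
  obtain a b where ab: "(x, a) \<in> (ddep P)\<^sup>*" "(a, b) \<in> edep P" "(b, x) \<in> (ddep P)\<^sup>*"
    using assms by blast
  obtain cs1 where c1: "cs1 \<noteq> []" "hd cs1 = x" "last cs1 = a"
      "successively (\<lambda>u v. (u, v) \<in> ddep P) cs1"
    using path_of_rtrancl[OF ab(1)] by blast
  obtain cs2 where c2: "cs2 \<noteq> []" "hd cs2 = b" "last cs2 = x"
      "successively (\<lambda>u v. (u, v) \<in> ddep P) cs2"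
    using path_of_rtrancl[OF ab(3)] by blast
  have ab': "(a, b) \<in> ddep P" using ab(2) unfolding ddep_def by blast
  let ?cs = "cs1 @ cs2"
  have succ: "successively (\<lambda>u v. (u, v) \<in> ddep P) ?cs"
    using c1 c2 ab' by (simp add: successively_append_iff)
  define i where "i = length cs1 - 1"
  have i1: "?cs ! i = a" using c1 by (simp add: i_def nth_append last_conv_nth)
  have i2: "?cs ! Suc i = b" using c1 c2
    by (simp add: i_def nth_append hd_conv_nth)
  have il: "Suc i < length ?cs" using c1 c2 by (simp add: i_def)
  show ?thesis unfolding has_e_cycle_def
    apply (rule exI[of _ ?cs])
    using c1 c2 succ il i1 i2 ab(2)
    by (auto simp: successively_conv_nth Suc_le_eq intro!: exI[of _ i])
qed

lemma sat_repl: "sat f B (repl b) = (case b of Ord a \<Rightarrow> a \<in> B | Ext g ps cs \<Rightarrow> EA g ps cs \<in> B)"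
  by (cases b) auto

theorem corollary1:
  fixes P :: "('p, 'c, 'g) program" and f :: "('p, 'c, 'g) orcl"
    and Ahat :: "('p, 'c, 'g) atom set"
  assumes "hex_program P"
    and "orc_local f"
    and "compatible_set P f Ahat"
    and "\<not> has_e_cycle P"
    and "\<forall>X. unfounded (guess_prog P) f Ahat X \<longrightarrow> X = {}"
  shows "unfounded_free P f {a \<in> Ahat. is_ordinary a}"
  unfolding unfounded_free_def
proof (intro allI impI)
  note hex = assms(1) and loc = assms(2) and comp = assms(3) and noc = assms(4) and nouf = assms(5)
  define A where "A = {a \<in> Ahat. is_ordinary a}"
  fix X assume unf: "unfounded P f {a \<in> Ahat. is_ordinary a} X"
  hence unf: "unfounded P f A X" by (simp add: A_def)
  show "{a \<in> Ahat. is_ordinary a} \<inter> X = {}"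
  proof (rule ccontr)
    assume ne: "{a \<in> Ahat. is_ordinary a} \<inter> X \<noteq> {}"
    define Z where "Z = A \<inter> X"
    have Zne: "Z \<noteq> {}" using ne by (simp add: Z_def A_def)
    have finP: "finite (atoms_of P)"
      using hex unfolding hex_program_def atoms_of_def
    proof -
      assume h: "finite P \<and> (\<forall>r\<in>P. finite (H r) \<and> finite (Bpos r) \<and> finite (Bneg r)
        \<and> (\<forall>a\<in>H r. is_ordinary a) \<and> (\<forall>a. Ord a \<in> Bpos r \<union> Bneg r \<longrightarrow> is_ordinary a))"
      have "\<And>r. r \<in> P \<Longrightarrow> finite {a. Ord a \<in> Bpos r \<union> Bneg r}"
      proof -
        fix r assume "r \<in> P"
        hence "finite (Bpos r \<union> Bneg r)" using h by blast
        hence "finite (inv Ord ` (Bpos r \<union> Bneg r))" by blast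
        moreover have "{a. Ord a \<in> Bpos r \<union> Bneg r} \<subseteq> inv Ord ` (Bpos r \<union> Bneg r)"
        proof
          fix a assume "a \<in> {a. Ord a \<in> Bpos r \<union> Bneg r}"
          hence "Ord a \<in> Bpos r \<union> Bneg r" by simp
          moreover have "inv Ord (Ord a) = a" by (simp add: inj_def)
          ultimately show "a \<in> inv Ord ` (Bpos r \<union> Bneg r)" by (metis image_eqI)
        qed
        ultimately show "finite {a. Ord a \<in> Bpos r \<union> Bneg r}" by (rule finite_subset[rotated])
      qed
      then show "finite (\<Union>r\<in>P. H r \<union> {a. Ord a \<in> Bpos r \<union> Bneg r})" using h by blast
    qed
    have XP: "X \<subseteq> atoms_of P" using unf unfolding unfounded_def by blast
    have finZ: "finite Z" using finite_subset[OF _ finP] XP unfolding Z_def by blast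
    define D where "D = dep P \<union> (dep P)\<inverse>"
    define S where "S = {(u, v). u \<in> Z \<and> v \<in> Z \<and> (\<exists>w. (u, w) \<in> D\<^sup>* \<and> (w, v) \<in> edep P)}"
    have finS: "finite S" using finZ
      by (rule finite_subset[rotated, OF finite_cartesian_product[OF finZ]]) (auto simp: S_def)
    have Dsub: "D\<^sup>* \<subseteq> (ddep P)\<^sup>*" unfolding D_def ddep_def by (rule rtrancl_mono) blast
    have ESub: "edep P \<subseteq> ddep P" unfolding ddep_def by blast
    have ST: "S\<^sup>+ \<subseteq> (ddep P)\<^sup>* O edep P O (ddep P)\<^sup>*"
    proof
      fix p assume "p \<in> S\<^sup>+"
      then obtain u v where p: "p = (u, v)" "(u, v) \<in> S\<^sup>+" by (cases p) auto
      from p(2) have "(u, v) \<in> (ddep P)\<^sup>* O edep P O (ddep P)\<^sup>*"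
      proof (induction rule: trancl_induct)
        case (base y)
        then show ?case unfolding S_def using Dsub by blast
      next
        case (step y z)
        from step(2) obtain w where "(y, w) \<in> D\<^sup>*" "(w, z) \<in> edep P" unfolding S_def by blast
        hence "(y, z) \<in> (ddep P)\<^sup>*" using Dsub ESub
          by (meson r_into_rtrancl rtrancl_trans subsetD)
        then show ?case using step(3) by (blast intro: rtrancl_trans)
      qed
      then show "p \<in> (ddep P)\<^sup>* O edep P O (ddep P)\<^sup>*" using p by simp
    qed
    have acyc: "acyclic S" unfolding acyclic_def
      using ST ecycle_of_path noc by blast
    have wfS: "wf (S\<inverse>)" by (rule finite_acyclic_wf_converse[OF finS acyc])
    obtain z where zZ: "z \<in> Z" and zmin: "\<And>y. (y, z) \<in> S\<inverse> \<Longrightarrow> y \<notin> Z"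
      using wfE_min'[OF wfS Zne] by blast
    have zsrc: "\<And>w y. (z, w) \<in> D\<^sup>* \<Longrightarrow> (w, y) \<in> edep P \<Longrightarrow> y \<notin> Z"
      using zmin zZ unfolding S_def by blast
    define Y where "Y = {y \<in> Z. (z, y) \<in> D\<^sup>*}"
    have zY: "z \<in> Y" using zZ by (simp add: Y_def)
    have YX: "Y \<subseteq> X" "Y \<subseteq> A" by (auto simp: Y_def Z_def)
    have Aord: "\<And>a. a \<in> A \<longleftrightarrow> a \<in> Ahat \<and> is_ordinary a" by (simp add: A_def)
    have hexr: "\<And>r. r \<in> P \<Longrightarrow> (\<forall>a\<in>H r. is_ordinary a) \<and> (\<forall>a. Ord a \<in> Bpos r \<union> Bneg r \<longrightarrow> is_ordinary a)"
      using hex unfolding hex_program_def by blast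
    have compat: "\<And>g ps cs. Ext g ps cs \<in> ext_atoms P \<Longrightarrow> (f g Ahat ps cs \<longleftrightarrow> EA g ps cs \<in> Ahat)"
      using comp unfolding compatible_set_def by blast
    have fA: "\<And>g ps cs. f g A ps cs = f g Ahat ps cs"
      using loc unfolding orc_local_def by (metis Aord is_ordinary.simps(1))
    have extA: "\<And>r g ps cs. r \<in> P \<Longrightarrow> Ext g ps cs \<in> Bpos r \<union> Bneg r \<Longrightarrow> f g A ps cs \<longleftrightarrow> EA g ps cs \<in> Ahat"
    proof -
      fix r g ps cs assume "r \<in> P" "Ext g ps cs \<in> Bpos r \<union> Bneg r"
      hence "Ext g ps cs \<in> ext_atoms P" unfolding ext_atoms_def by blast
      thus "f g A ps cs \<longleftrightarrow> EA g ps cs \<in> Ahat" using compat fA by simp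
    qed
    have extAX: "\<And>r h g ps cs. r \<in> P \<Longrightarrow> h \<in> H r \<Longrightarrow> h \<in> Y \<Longrightarrow> Ext g ps cs \<in> Bpos r \<union> Bneg r
       \<Longrightarrow> f g (A - X) ps cs = f g A ps cs"
    proof -
      fix r h g ps cs assume r: "r \<in> P" "h \<in> H r" "h \<in> Y" "Ext g ps cs \<in> Bpos r \<union> Bneg r"
      have "\<forall>p args. IP p \<in> set ps \<longrightarrow> (OA p args \<in> A - X \<longleftrightarrow> OA p args \<in> A)"
      proof (intro allI impI)
        fix p args assume "IP p \<in> set ps"
        hence "(h, OA p args) \<in> edep P" using r unfolding edep_def by blast
        moreover have "(z, h) \<in> D\<^sup>*" using r(3) by (simp add: Y_def)
        ultimately have "OA p args \<notin> Z" using zsrc by blast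
        thus "OA p args \<in> A - X \<longleftrightarrow> OA p args \<in> A" by (auto simp: Z_def)
      qed
      thus "f g (A - X) ps cs = f g A ps cs" using loc unfolding orc_local_def by blast
    qed
    have "unfounded (guess_prog P) f Ahat Y"
      unfolding unfounded_def
    proof (intro conjI ballI impI)
      show "Y \<subseteq> atoms_of (guess_prog P)"
      proof
        fix y assume "y \<in> Y"
        hence "y \<in> atoms_of P" using YX XP by blast
        then obtain r where r: "r \<in> P" "y \<in> H r \<or> Ord y \<in> Bpos r \<or> Ord y \<in> Bneg r"
          unfolding atoms_of_def by blast
        let ?r = "Rule (H r) (repl ` Bpos r) (repl ` Bneg r)"
        have "?r \<in> guess_prog P" using r unfolding guess_prog_def by blast
        moreover have "y \<in> H ?r \<or> Ord y \<in> Bpos ?r \<or> Ord y \<in> Bneg ?r"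
          using r(2) by (auto intro: image_eqI[where x="Ord y"])
        ultimately show "y \<in> atoms_of (guess_prog P)" unfolding atoms_of_def by blast
      qed
    next
      fix r' assume r'G: "r' \<in> guess_prog P" and hr': "H r' \<inter> Y \<noteq> {}"
      have Yord: "\<And>y. y \<in> Y \<Longrightarrow> is_ordinary y" using YX Aord by blast
      have "\<exists>r\<in>P. r' = Rule (H r) (repl ` Bpos r) (repl ` Bneg r)"
      proof (rule ccontr)
        assume "\<not> ?thesis"
        then obtain g ps cs where "r' = Rule {EA g ps cs, NEA g ps cs} {} {}"
          using r'G unfolding guess_prog_def by blast
        then show False using hr' Yord by fastforce
      qed
      then obtain r where rP: "r \<in> P" and r': "r' = Rule (H r) (repl ` Bpos r) (repl ` Bneg r)" by blast
      obtain h where hH: "h \<in> H r" and hY: "h \<in> Y" using hr' r' by auto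
      have hX: "h \<in> X" using hY YX by blast
      have ordr: "\<And>a. Ord a \<in> Bpos r \<union> Bneg r \<Longrightarrow> is_ordinary a" using hexr[OF rP] by blast
      have bfA: "body_false f Ahat r'" if "body_false f A r"
      proof -
        from that show ?thesis unfolding body_false_def
        proof (elim disjE bexE)
          fix b assume b: "b \<in> Bpos r" "\<not> sat f A b"
          have "\<not> sat f Ahat (repl b)"
          proof (cases b)
            case (Ord a) then show ?thesis using b ordr Aord by (auto simp: sat_repl)
          next
            case (Ext g ps cs) then show ?thesis using b extA[OF rP] by (auto simp: sat_repl)
          qed
          then show "(\<exists>b\<in>Bpos r'. \<not> sat f Ahat b) \<or> (\<exists>b\<in>Bneg r'. sat f Ahat b)"
            using b r' by auto
        next
          fix b assume b: "b \<in> Bneg r" "sat f A b"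
          have "sat f Ahat (repl b)"
          proof (cases b)
            case (Ord a) then show ?thesis using b Aord by (auto simp: sat_repl)
          next
            case (Ext g ps cs) then show ?thesis using b extA[OF rP] by (auto simp: sat_repl)
          qed
          then show "(\<exists>b\<in>Bpos r'. \<not> sat f Ahat b) \<or> (\<exists>b\<in>Bneg r'. sat f Ahat b)"
            using b r' by auto
        qed
      qed
      have "H r \<inter> X \<noteq> {}" using hH hX by blast
      hence cases: "body_false f A r \<or> body_false f (A - X) r \<or> (H r - X) \<inter> A \<noteq> {}"
        using unf rP unfolding unfounded_def by blast
      show "body_false f Ahat r' \<or> body_false f (Ahat - Y) r' \<or> (H r' - Y) \<inter> Ahat \<noteq> {}"
        using cases
      proof (elim disjE)
        assume "body_false f A r" then show ?thesis using bfA by blast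
      next
        assume "(H r - X) \<inter> A \<noteq> {}" then show ?thesis using r' YX Aord by auto
      next
        assume "body_false f (A - X) r"
        then have "(\<exists>b\<in>Bpos r. \<not> sat f (A - X) b) \<or> (\<exists>b\<in>Bneg r. sat f (A - X) b)" by (simp add: body_false_def)
        then show ?thesis
        proof (elim disjE bexE)
          fix b assume b: "b \<in> Bpos r" "\<not> sat f (A - X) b"
          show ?thesis
          proof (cases b)
            case (Ord a)
            show ?thesis
            proof (cases "a \<in> A")
              case False
              then have "body_false f A r" using b Ord unfolding body_false_def by (metis sat.simps(1))
              then show ?thesis using bfA by blast
            next
              case True
              then have aZ: "a \<in> Z" using b Ord by (auto simp: Z_def)
              have "(h, a) \<in> dep P" using rP hH b Ord unfolding dep_def by blast
              hence "(h, a) \<in> D" unfolding D_def by blast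
              moreover have "(z, h) \<in> D\<^sup>*" using hY by (simp add: Y_def)
              ultimately have "a \<in> Y" using aZ by (auto simp: Y_def)
              hence "\<not> sat f (Ahat - Y) (repl b)" using Ord by simp
              moreover have "repl b \<in> Bpos r'" using r' b by simp
              ultimately show ?thesis unfolding body_false_def by blast
            qed
          next
            case (Ext g ps cs)
            have "f g (A - X) ps cs = f g A ps cs" using extAX[OF rP hH hY] b Ext by blast
            hence "body_false f A r" using b Ext unfolding body_false_def by (metis sat.simps(2))
            then show ?thesis using bfA by blast
          qed
        next
          fix b assume b: "b \<in> Bneg r" "sat f (A - X) b"
          have "sat f A b"
          proof (cases b)
            case (Ord a) then show ?thesis using b by auto
          next
            case (Ext g ps cs)
            have "f g (A - X) ps cs = f g A ps cs" using extAX[OF rP hH hY] b Ext by blast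
            then show ?thesis using b Ext by auto
          qed
          hence "body_false f A r" using b unfolding body_false_def by blast
          then show ?thesis using bfA by blast
        qed
      qed
    qed
    hence "Y = {}" using nouf by blast
    then show False using zY by blast
  qed
qed

end
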